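(* Let $\boldsymbol\alpha,\boldsymbol\beta\in\mathbb R^{\mathcal X}$ be probability vectors with $x_{\max}(\boldsymbol\alpha)=x_{\max}(\boldsymbol\beta)$, and let $r>0$. If $\mathcal Q'(\boldsymbol\alpha,r)\cap\mathcal Q'(\boldsymbol\beta,r)\neq\emptyset$, then $d(\boldsymbol\alpha,\boldsymbol\beta)\le r$.
   Context: $\mathcal X$ finite, $|\mathcal X|\ge2$. For $a\ge0,\zeta\in\mathbb R$: $d_1(a,\zeta)=|\zeta-a|$; $d_2(a,\zeta)=(\zeta-a)^2/\min(a,\zeta)$ if $a,\zeta>0$, else $\infty$; $d(a,\zeta)=\min(d_1,d_2)$; for vectors $d(\boldsymbol\alpha,\boldsymbol\zeta)=\max_{x\in\mathcal X}d(\alpha_x,\zeta_x)$. $x_{\max}(\boldsymbol\alpha)$ is an index of a largest entry of $\boldsymbol\alpha$, ties broken in an arbitrary but consistent way. Given $x_{\max}$, let $\mathcal X'=\mathcal X\setminus\{x_{\max}\}$. $\omega_\downarrow(a,r)=\max(\sqrt{r^2/4+ar}-r/2,\ r)$, $\omega'(a,r)=\omega_\downarrow(a,r)/(|\mathcal X|-1)$. The quadrant is $\mathcal Q'(\boldsymbol\alpha,r)=\{\boldsymbol\zeta'=(\zeta_x)_{x\in\mathcal X'}\in\mathbb R^{\mathcal X'}: 0\le\zeta_x-\alpha_x\le\omega'(\alpha_x,r)\ \forall x\in\mathcal X'\}$, with $x_{\max}=x_{\max}(\boldsymbol\alpha)$. *)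

theory Defs
  imports Complex_Main "HOL-Library.Extended_Real" "HOL-Library.FuncSet"
begin

definition d1 :: "real \<Rightarrow> real \<Rightarrow> ereal" where
  "d1 a z = ereal \<bar>z - a\<bar>"

definition d2 :: "real \<Rightarrow> real \<Rightarrow> ereal" where
  "d2 a z = (if a > 0 \<and> z > 0 then ereal ((z - a)\<^sup>2 / min a z) else \<infinity>)"

definition dist_d :: "real \<Rightarrow> real \<Rightarrow> ereal" where
  "dist_d a z = min (d1 a z) (d2 a z)"

definition dvec :: "('x::finite \<Rightarrow> real) \<Rightarrow> ('x \<Rightarrow> real) \<Rightarrow> ereal" where
  "dvec \<alpha> \<zeta> = (MAX x\<in>UNIV. dist_d (\<alpha> x) (\<zeta> x))"

definition prob_vec :: "('x::finite \<Rightarrow> real) \<Rightarrow> bool" where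
  "prob_vec \<alpha> \<longleftrightarrow> (\<forall>x. 0 \<le> \<alpha> x) \<and> sum \<alpha> UNIV = 1"

text \<open>A tie-breaking rule: a fixed function returning an index of a largest entry.\<close>
definition is_xmax_rule :: "(('x::finite \<Rightarrow> real) \<Rightarrow> 'x) \<Rightarrow> bool" where
  "is_xmax_rule xm \<longleftrightarrow> (\<forall>\<alpha> y. \<alpha> y \<le> \<alpha> (xm \<alpha>))"

definition omega_down :: "real \<Rightarrow> real \<Rightarrow> real" where
  "omega_down a r = max (sqrt (r\<^sup>2 / 4 + a * r) - r / 2) r"

definition omega' :: "nat \<Rightarrow> real \<Rightarrow> real \<Rightarrow> real" where
  "omega' n a r = omega_down a r / (real n - 1)"

definition quadrant :: "(('x::finite \<Rightarrow> real) \<Rightarrow> 'x) \<Rightarrow> ('x \<Rightarrow> real) \<Rightarrow> real \<Rightarrow> ('x \<Rightarrow> real) set" where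
  "quadrant xm \<alpha> r = {\<zeta> \<in> extensional (UNIV - {xm \<alpha>}).
      \<forall>x \<in> UNIV - {xm \<alpha>}. 0 \<le> \<zeta> x - \<alpha> x \<and> \<zeta> x - \<alpha> x \<le> omega' (card (UNIV :: 'x set)) (\<alpha> x) r}"

end

theory Submission
  imports Defs
begin

lemma omega_down_mono:
  assumes "a \<le> b" "r > 0" "0 \<le> a"
  shows "omega_down a r \<le> omega_down b r"
proof -
  have "sqrt (r\<^sup>2 / 4 + a * r) \<le> sqrt (r\<^sup>2 / 4 + b * r)"
    using assms by (intro real_sqrt_le_mono) (simp add: mult_right_mono)
  thus ?thesis unfolding omega_down_def by (intro max.mono) auto
qed

lemma div_le_w: "0 \<le> (w::real) \<Longrightarrow> 1 \<le> c \<Longrightarrow> w / c \<le> w"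
  by (simp add: divide_le_eq mult_le_cancel_left1)

lemma omega_down_ge: "r \<le> omega_down a r"
  unfolding omega_down_def by auto

lemma dist_d_sym: "dist_d a b = dist_d b a"
  unfolding dist_d_def d1_def d2_def by (auto simp: min.commute abs_minus_commute power2_commute)

lemma core:
  assumes "0 \<le> a" "a \<le> b" "b - a \<le> omega_down a r" "r > 0"
  shows "dist_d a b \<le> ereal r"
proof (cases "b - a \<le> r")
  case True
  have "dist_d a b \<le> d1 a b" unfolding dist_d_def by simp
  also have "d1 a b \<le> ereal r" unfolding d1_def using True assms by simp
  finally show ?thesis .
next
  case False
  define q where "q = r\<^sup>2 / 4 + a * r"
  define s where "s = sqrt q - r / 2"
  have q0: "q \<ge> 0" unfolding q_def using assms by auto
  have bs: "b - a \<le> s" using False assms(3) unfolding omega_down_def s_def q_def by auto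
  have sr: "s > r" using bs False by simp
  have apos: "a > 0"
  proof (rule ccontr)
    assume "\<not> a > 0"
    hence "a = 0" using assms by simp
    hence "q = (r/2)\<^sup>2" unfolding q_def by (simp add: power2_eq_square)
    hence "sqrt q = r/2" using assms by simp
    thus False using sr assms unfolding s_def by simp
  qed
  have sq: "(sqrt q)\<^sup>2 = q" using q0 by simp
  have seq: "s\<^sup>2 = r * (a - s)" unfolding s_def using sq unfolding q_def
    by (simp add: power2_eq_square algebra_simps)
  have "(b - a)\<^sup>2 \<le> s\<^sup>2" using bs False assms by (intro power_mono) auto
  also have "\<dots> \<le> r * a"
  proof -
    have "r * s > 0" using sr assms by simp
    thus ?thesis using seq by (simp add: algebra_simps)
  qed
  finally have "(b-a)\<^sup>2 / a \<le> r" using apos by (simp add: divide_le_eq mult.commute)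
  moreover have "d2 a b = ereal ((b-a)\<^sup>2 / a)" unfolding d2_def using apos assms
    by (simp add: min_def)
  ultimately have "d2 a b \<le> ereal r" by simp
  moreover have "dist_d a b \<le> d2 a b" unfolding dist_d_def by simp
  ultimately show ?thesis by (meson order_trans)
qed

lemma core2:
  assumes "0 \<le> a" "0 \<le> b" "b - a \<le> omega_down a r" "a - b \<le> omega_down b r" "r > 0"
  shows "dist_d a b \<le> ereal r"
proof (cases "a \<le> b")
  case True then show ?thesis using core assms by blast
next
  case False then show ?thesis using core[of b a r] assms dist_d_sym by simp
qed

theorem lemma5:
  fixes xm :: "('x::finite \<Rightarrow> real) \<Rightarrow> 'x"
    and \<alpha> \<beta> :: "'x \<Rightarrow> real" and r :: real
  assumes "card (UNIV :: 'x set) \<ge> 2"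
    and "is_xmax_rule xm"
    and "prob_vec \<alpha>" and "prob_vec \<beta>"
    and "xm \<alpha> = xm \<beta>"
    and "r > 0"
    and "quadrant xm \<alpha> r \<inter> quadrant xm \<beta> r \<noteq> {}"
  shows "dvec \<alpha> \<beta> \<le> ereal r"
proof -
  define m where "m = xm \<alpha>"
  define n where "n = card (UNIV :: 'x set)"
  define X' where "X' = UNIV - {m}"
  have n1: "real n - 1 \<ge> 1" using assms(1) unfolding n_def by simp
  have cX: "real (card X') = real n - 1" unfolding X'_def n_def
    using assms(1) by (simp add: card_Diff_subset of_nat_diff)
  obtain \<zeta> where z: "\<zeta> \<in> quadrant xm \<alpha> r" "\<zeta> \<in> quadrant xm \<beta> r" using assms(7) by blast
  have a0: "\<And>x. 0 \<le> \<alpha> x" and b0: "\<And>x. 0 \<le> \<beta> x"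
    using assms(3,4) unfolding prob_vec_def by auto
  have amax: "\<And>x. \<alpha> x \<le> \<alpha> m"
    using assms(2) unfolding is_xmax_rule_def m_def by blast
  have bmax: "\<And>x. \<beta> x \<le> \<beta> m"
    using assms(2) unfolding is_xmax_rule_def m_def assms(5) by blast
  have k1: "\<alpha> x - \<beta> x \<le> omega_down (\<beta> x) r / (real n - 1)" if "x \<in> X'" for x
  proof -
    have "x \<in> UNIV - {xm \<beta>}" "x \<in> UNIV - {xm \<alpha>}" using that assms(5) unfolding X'_def m_def by auto
    hence "\<zeta> x - \<beta> x \<le> omega' n (\<beta> x) r" "0 \<le> \<zeta> x - \<alpha> x"
      using z unfolding quadrant_def n_def by blast+
    thus ?thesis unfolding omega'_def by simp
  qed
  have k2: "\<beta> x - \<alpha> x \<le> omega_down (\<alpha> x) r / (real n - 1)" if "x \<in> X'" for x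
  proof -
    have "x \<in> UNIV - {xm \<beta>}" "x \<in> UNIV - {xm \<alpha>}" using that assms(5) unfolding X'_def m_def by auto
    hence "\<zeta> x - \<alpha> x \<le> omega' n (\<alpha> x) r" "0 \<le> \<zeta> x - \<beta> x"
      using z unfolding quadrant_def n_def by blast+
    thus ?thesis unfolding omega'_def by simp
  qed
  have odpos: "\<And>a. 0 \<le> omega_down a r" using omega_down_ge[of r] assms(6) by (meson less_le order_trans)
  have k1': "\<alpha> x - \<beta> x \<le> omega_down (\<beta> x) r" if "x \<in> X'" for x
    using k1[OF that] odpos[of "\<beta> x"] n1 by (meson div_le_w order_trans)
  have k2': "\<beta> x - \<alpha> x \<le> omega_down (\<alpha> x) r" if "x \<in> X'" for x
    using k2[OF that] odpos[of "\<alpha> x"] n1 by (meson div_le_w order_trans)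
  have sa: "\<alpha> m + sum \<alpha> X' = 1" using assms(3) unfolding prob_vec_def X'_def
    using sum.remove[of UNIV m] by (metis finite UNIV_I)
  have sb: "\<beta> m + sum \<beta> X' = 1" using assms(4) unfolding prob_vec_def X'_def
    using sum.remove[of UNIV m] by (metis finite UNIV_I)
  have m1: "\<beta> m - \<alpha> m \<le> omega_down (\<alpha> m) r"
  proof -
    have t: "\<alpha> x - \<beta> x \<le> omega_down (\<alpha> m) r / (real n - 1)" if "x \<in> X'" for x
    proof (cases "\<alpha> x \<le> \<beta> x")
      case True
      have "0 \<le> omega_down (\<alpha> m) r / (real n - 1)" using odpos[of "\<alpha> m"] n1 by simp
      thus ?thesis using True by linarith
    next
      case False
      have "omega_down (\<beta> x) r \<le> omega_down (\<alpha> m) r"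
        using False amax[of x] b0 assms(6) by (intro omega_down_mono) auto
      hence "omega_down (\<beta> x) r / (real n - 1) \<le> omega_down (\<alpha> m) r / (real n - 1)"
        using n1 by (intro divide_right_mono) auto
      thus ?thesis using k1[OF that] by linarith
    qed
    have "\<beta> m - \<alpha> m = (\<Sum>x\<in>X'. \<alpha> x - \<beta> x)" using sa sb by (simp add: sum_subtractf)
    also have "\<dots> \<le> (\<Sum>x\<in>X'. omega_down (\<alpha> m) r / (real n - 1))" by (rule sum_mono) (rule t)
    also have "\<dots> = omega_down (\<alpha> m) r" using cX n1 by simp
    finally show ?thesis .
  qed
  have m2: "\<alpha> m - \<beta> m \<le> omega_down (\<beta> m) r"
  proof -
    have t: "\<beta> x - \<alpha> x \<le> omega_down (\<beta> m) r / (real n - 1)" if "x \<in> X'" for x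
    proof (cases "\<beta> x \<le> \<alpha> x")
      case True
      have "0 \<le> omega_down (\<beta> m) r / (real n - 1)" using odpos[of "\<beta> m"] n1 by simp
      thus ?thesis using True by linarith
    next
      case False
      have "omega_down (\<alpha> x) r \<le> omega_down (\<beta> m) r"
        using False bmax[of x] a0 assms(6) by (intro omega_down_mono) auto
      hence "omega_down (\<alpha> x) r / (real n - 1) \<le> omega_down (\<beta> m) r / (real n - 1)"
        using n1 by (intro divide_right_mono) auto
      thus ?thesis using k2[OF that] by linarith
    qed
    have "\<alpha> m - \<beta> m = (\<Sum>x\<in>X'. \<beta> x - \<alpha> x)" using sa sb by (simp add: sum_subtractf)
    also have "\<dots> \<le> (\<Sum>x\<in>X'. omega_down (\<beta> m) r / (real n - 1))" by (rule sum_mono) (rule t)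
    also have "\<dots> = omega_down (\<beta> m) r" using cX n1 by simp
    finally show ?thesis .
  qed
  have all: "dist_d (\<alpha> x) (\<beta> x) \<le> ereal r" for x
  proof (cases "x = m")
    case True thus ?thesis using core2 m1 m2 a0 b0 assms(6) by blast
  next
    case False hence "x \<in> X'" unfolding X'_def by simp
    thus ?thesis using core2 k1' k2' a0 b0 assms(6) by blast
  qed
  show ?thesis unfolding dvec_def using all by (simp add: Max_le_iff)
qed

end
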